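(* Let $T$ be a tree with no vertex of valency one, with the two parts of its natural bipartition denoted $V_1, V_2$. Suppose $G\le \mathrm{Aut}(T)$ is closed and fixes $V_1$ and $V_2$ setwise. Then $G|_{V_i}$ is closed in $\mathrm{Sym}(V_i)$ for $i=1,2$. Moreover, if for every vertex $v$ the group $G_v|_{B(v)}$ is closed in $\mathrm{Sym}(B(v))$, then the following are equivalent: (1) for all $v\in V_1$ and $w\in V_2$, all point stabilisers in $G_v|_{B(v)}$ are compact and $G_w|_{B(w)}$ is compact; (2) all point stabilisers in $G|_{V_2}$ are compact.
   Context: $B(v)$ is the set of neighbours of $v$; $G_v$ is the stabiliser of $v$ and $G_v|_{B(v)}$ the permutation group it induces on $B(v)$; $G|_{V_i}$ is the permutation group induced by $G$ on $V_i$. For any set $V$, $\mathrm{Sym}(V)$ carries the permutation topology (topology of pointwise convergence, with pointwise stabilisers of finite subsets forming a basis of identity neighbourhoods), and $\mathrm{Aut}(T)$ carries this topology as a group of permutations of $VT$. *)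

theory Defs
  imports "HOL-Analysis.Analysis"
begin

definition walk_in :: "'v set \<Rightarrow> ('v \<Rightarrow> 'v \<Rightarrow> bool) \<Rightarrow> 'v list \<Rightarrow> bool" where
  "walk_in V E xs \<longleftrightarrow> xs \<noteq> [] \<and> set xs \<subseteq> V \<and> (\<forall>i. Suc i < length xs \<longrightarrow> E (xs ! i) (xs ! Suc i))"

definition is_cycle :: "'v set \<Rightarrow> ('v \<Rightarrow> 'v \<Rightarrow> bool) \<Rightarrow> 'v list \<Rightarrow> bool" where
  "is_cycle V E xs \<longleftrightarrow> walk_in V E xs \<and> distinct xs \<and> length xs \<ge> 3 \<and> E (last xs) (hd xs)"

definition is_tree :: "'v set \<Rightarrow> ('v \<Rightarrow> 'v \<Rightarrow> bool) \<Rightarrow> bool" where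
  "is_tree V E \<longleftrightarrow> V \<noteq> {}
     \<and> (\<forall>x y. E x y \<longrightarrow> x \<in> V \<and> y \<in> V)
     \<and> (\<forall>x y. E x y \<longrightarrow> E y x)
     \<and> (\<forall>x. \<not> E x x)
     \<and> (\<forall>x\<in>V. \<forall>y\<in>V. \<exists>xs. walk_in V E xs \<and> hd xs = x \<and> last xs = y)
     \<and> (\<nexists>xs. is_cycle V E xs)"

definition nbhd :: "'v set \<Rightarrow> ('v \<Rightarrow> 'v \<Rightarrow> bool) \<Rightarrow> 'v \<Rightarrow> 'v set" where
  "nbhd V E v = {w \<in> V. E v w}"

definition Sym :: "'a set \<Rightarrow> ('a \<Rightarrow> 'a) set" where
  "Sym X = {f. bij_betw f X X \<and> (\<forall>x. x \<notin> X \<longrightarrow> f x = x)}"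

text \<open>Permutation topology on Sym(X): generated by the cosets h U_F of pointwise stabilisers
  U_F of finite subsets F of X (topology of pointwise convergence).\<close>
definition perm_top :: "'a set \<Rightarrow> ('a \<Rightarrow> 'a) topology" where
  "perm_top X = topology_generated_by
     {{g \<in> Sym X. \<forall>x\<in>F. g x = h x} | F h. finite F \<and> F \<subseteq> X \<and> h \<in> Sym X}"

definition Aut :: "'v set \<Rightarrow> ('v \<Rightarrow> 'v \<Rightarrow> bool) \<Rightarrow> ('v \<Rightarrow> 'v) set" where
  "Aut V E = {g \<in> Sym V. \<forall>x\<in>V. \<forall>y\<in>V. E x y \<longleftrightarrow> E (g x) (g y)}"

definition is_subgroup :: "('a \<Rightarrow> 'a) set \<Rightarrow> ('a \<Rightarrow> 'a) set \<Rightarrow> bool" where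
  "is_subgroup G H \<longleftrightarrow> G \<subseteq> H \<and> id \<in> G \<and> (\<forall>g\<in>G. \<forall>h\<in>G. g \<circ> h \<in> G) \<and> (\<forall>g\<in>G. inv g \<in> G)"

definition restr :: "'a set \<Rightarrow> ('a \<Rightarrow> 'a) \<Rightarrow> ('a \<Rightarrow> 'a)" where
  "restr A g = (\<lambda>x. if x \<in> A then g x else x)"

definition induced :: "('a \<Rightarrow> 'a) set \<Rightarrow> 'a set \<Rightarrow> ('a \<Rightarrow> 'a) set" where
  "induced H A = restr A ` H"

definition stab :: "('a \<Rightarrow> 'a) set \<Rightarrow> 'a \<Rightarrow> ('a \<Rightarrow> 'a) set" where
  "stab H x = {g \<in> H. g x = x}"

end

theory Submission
  imports Defs
begin



definition NB :: "'a set \<Rightarrow> ('a \<Rightarrow> 'a) \<Rightarrow> 'a set \<Rightarrow> ('a \<Rightarrow> 'a) set" where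
  "NB X f F = {g \<in> Sym X. \<forall>x\<in>F. g x = f x}"

definition GB :: "'a set \<Rightarrow> ('a \<Rightarrow> 'a) set set" where
  "GB X = {{g \<in> Sym X. \<forall>x\<in>F. g x = h x} | F h. finite F \<and> F \<subseteq> X \<and> h \<in> Sym X}"

lemma perm_top_GB: "perm_top X = topology_generated_by (GB X)"
  unfolding perm_top_def GB_def ..

lemma NB_GB: "finite F \<Longrightarrow> F \<subseteq> X \<Longrightarrow> h \<in> Sym X \<Longrightarrow> NB X h F \<in> GB X"
  unfolding NB_def GB_def by blast

lemma GB_NB: "s \<in> GB X \<Longrightarrow> \<exists>F h. finite F \<and> F \<subseteq> X \<and> h \<in> Sym X \<and> s = NB X h F"
  unfolding NB_def GB_def by blast

lemma NB_mono: "F \<subseteq> F' \<Longrightarrow> NB X f F' \<subseteq> NB X f F"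
  unfolding NB_def by blast

lemma id_Sym: "id \<in> Sym X"
  by (simp add: Sym_def)

lemma topspace_perm_top: "topspace (perm_top X) = Sym X"
proof -
  have "NB X id {} \<in> GB X" by (rule NB_GB) (auto simp: id_Sym)
  moreover have "NB X id {} = Sym X" unfolding NB_def by simp
  moreover have "\<Union>(GB X) \<subseteq> Sym X" unfolding GB_def by blast
  ultimately have "\<Union>(GB X) = Sym X" by blast
  then show ?thesis unfolding perm_top_GB topology_generated_by_topspace .
qed

lemma openin_perm_top:
  "openin (perm_top X) U \<longleftrightarrow> U \<subseteq> Sym X \<and> (\<forall>f\<in>U. \<exists>F. finite F \<and> F \<subseteq> X \<and> NB X f F \<subseteq> U)"
proof
  assume "openin (perm_top X) U"
  then have "generate_topology_on (GB X) U"
    unfolding perm_top_GB by (rule openin_topology_generated_by)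
  then show "U \<subseteq> Sym X \<and> (\<forall>f\<in>U. \<exists>F. finite F \<and> F \<subseteq> X \<and> NB X f F \<subseteq> U)"
  proof induction
    case Empty then show ?case by simp
  next
    case (Int a b)
    show ?case
    proof (intro conjI ballI)
      show "a \<inter> b \<subseteq> Sym X" using Int.IH by blast
      fix f assume f: "f \<in> a \<inter> b"
      then have "f \<in> a" "f \<in> b" by auto
      then obtain F1 F2 where F: "finite F1" "F1 \<subseteq> X" "NB X f F1 \<subseteq> a" "finite F2" "F2 \<subseteq> X" "NB X f F2 \<subseteq> b"
        using Int.IH by meson
      have "NB X f (F1 \<union> F2) \<subseteq> NB X f F1" "NB X f (F1 \<union> F2) \<subseteq> NB X f F2" by (simp_all add: NB_mono)
      then have "NB X f (F1 \<union> F2) \<subseteq> a \<inter> b" using F by blast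
      moreover have "finite (F1 \<union> F2)" "F1 \<union> F2 \<subseteq> X" using F by auto
      ultimately show "\<exists>F. finite F \<and> F \<subseteq> X \<and> NB X f F \<subseteq> a \<inter> b" by blast
    qed
  next
    case (UN K)
    show ?case
    proof (intro conjI ballI)
      show "\<Union>K \<subseteq> Sym X" using UN.IH by blast
      fix f assume "f \<in> \<Union>K"
      then obtain k where k: "k \<in> K" "f \<in> k" by blast
      then obtain F where "finite F" "F \<subseteq> X" "NB X f F \<subseteq> k" using UN.IH by meson
      then show "\<exists>F. finite F \<and> F \<subseteq> X \<and> NB X f F \<subseteq> \<Union>K" using k(1) by blast
    qed
  next
    case (Basis s)
    then obtain F h where s: "finite F" "F \<subseteq> X" "h \<in> Sym X" "s = NB X h F" using GB_NB by meson
    show ?case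
    proof (intro conjI ballI)
      show "s \<subseteq> Sym X" using s unfolding NB_def by blast
      fix f assume "f \<in> s"
      then have "NB X f F = s" using s unfolding NB_def by auto
      then show "\<exists>F. finite F \<and> F \<subseteq> X \<and> NB X f F \<subseteq> s"
        using s by blast
    qed
  qed
next
  assume A: "U \<subseteq> Sym X \<and> (\<forall>f\<in>U. \<exists>F. finite F \<and> F \<subseteq> X \<and> NB X f F \<subseteq> U)"
  define K where "K = {NB X f F | f F. f \<in> U \<and> finite F \<and> F \<subseteq> X \<and> NB X f F \<subseteq> U}"
  have "U = \<Union>K"
  proof
    show "U \<subseteq> \<Union>K"
    proof
      fix f assume "f \<in> U"
      then obtain F where F: "finite F" "F \<subseteq> X" "NB X f F \<subseteq> U" using A by meson
      have "f \<in> NB X f F" using \<open>f \<in> U\<close> A unfolding NB_def by blast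
      moreover have "NB X f F \<in> K" unfolding K_def using F \<open>f \<in> U\<close> by blast
      ultimately show "f \<in> \<Union>K" by blast
    qed
    show "\<Union>K \<subseteq> U" unfolding K_def by blast
  qed
  moreover have "generate_topology_on (GB X) (\<Union>K)"
  proof (rule generate_topology_on.UN)
    fix k assume "k \<in> K"
    then obtain f F where k: "k = NB X f F" "f \<in> U" "finite F" "F \<subseteq> X" unfolding K_def by blast
    then have "f \<in> Sym X" using A by blast
    then have "k \<in> GB X" using k NB_GB by metis
    then show "generate_topology_on (GB X) k" by (rule generate_topology_on.Basis)
  qed
  ultimately show "openin (perm_top X) U"
    unfolding perm_top_GB openin_topology_generated_by_iff by simp
qed

lemma closedin_perm_top:
  "closedin (perm_top X) S \<longleftrightarrow> S \<subseteq> Sym X \<and>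
    (\<forall>f\<in>Sym X. (\<forall>F. finite F \<and> F \<subseteq> X \<longrightarrow> (\<exists>g\<in>S. \<forall>x\<in>F. g x = f x)) \<longrightarrow> f \<in> S)"
    (is "?L \<longleftrightarrow> ?R")
proof -
  have "?L \<longleftrightarrow> S \<subseteq> Sym X \<and> openin (perm_top X) (Sym X - S)"
    unfolding closedin_def topspace_perm_top by simp
  also have "\<dots> \<longleftrightarrow> S \<subseteq> Sym X \<and> (\<forall>f\<in>Sym X - S. \<exists>F. finite F \<and> F \<subseteq> X \<and> NB X f F \<subseteq> Sym X - S)"
    unfolding openin_perm_top by blast
  also have "\<dots> \<longleftrightarrow> ?R"
  proof -
    have "NB X f F \<subseteq> Sym X - S \<longleftrightarrow> \<not> (\<exists>g\<in>S. \<forall>x\<in>F. g x = f x)" if "S \<subseteq> Sym X" for f F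
      using that unfolding NB_def by blast
    then show ?thesis by blast
  qed
  finally show ?thesis .
qed




lemma Sym_bij: "f \<in> Sym X \<Longrightarrow> bij f"
proof -
  assume f: "f \<in> Sym X"
  then have b: "bij_betw f X X" and o: "\<And>x. x \<notin> X \<Longrightarrow> f x = x" by (auto simp: Sym_def)
  have "inj f"
  proof (rule injI)
    fix x y assume e: "f x = f y"
    show "x = y"
    proof (cases "x \<in> X"; cases "y \<in> X")
      assume "x \<in> X" "y \<in> X" then show ?thesis using b e by (auto simp: bij_betw_def inj_on_def)
    next
      assume "x \<in> X" "y \<notin> X" then show ?thesis using b e o[of y] by (auto simp: bij_betw_def)
    next
      assume "x \<notin> X" "y \<in> X" then show ?thesis using b e o[of x] by (auto simp: bij_betw_def)
    next
      assume "x \<notin> X" "y \<notin> X" then show ?thesis using e o by auto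
    qed
  qed
  moreover have "surj f"
  proof -
    have "y \<in> range f" for y
    proof (cases "y \<in> X")
      case True then show ?thesis using b by (auto simp: bij_betw_def)
    next
      case False then show ?thesis using o[of y] by (metis rangeI)
    qed
    then show ?thesis by blast
  qed
  ultimately show ?thesis by (simp add: bij_def)
qed

lemma Sym_in: "f \<in> Sym X \<Longrightarrow> x \<in> X \<Longrightarrow> f x \<in> X"
  by (auto simp: Sym_def bij_betw_def)

lemma Sym_inv_in: "f \<in> Sym X \<Longrightarrow> y \<in> X \<Longrightarrow> inv f y \<in> X"
proof -
  assume f: "f \<in> Sym X" and y: "y \<in> X"
  have "f (inv f y) = y" using Sym_bij[OF f] by (simp add: bij_def surj_f_inv_f)
  then show ?thesis using f y by (auto simp: Sym_def)
qed

lemma compact_orbit_finite: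
  assumes "compactin (perm_top X) S" "x \<in> X"
  shows "finite ((\<lambda>g. g x) ` S)"
proof -
  define U where "U = (\<lambda>y. {g \<in> Sym X. g x = y}) ` X"
  have S: "S \<subseteq> Sym X" using assms(1) by (simp add: compactin_def topspace_perm_top)
  have "\<forall>u\<in>U. openin (perm_top X) u"
  proof
    fix u assume "u \<in> U"
    then obtain y where u: "u = {g \<in> Sym X. g x = y}" unfolding U_def by blast
    show "openin (perm_top X) u" unfolding openin_perm_top u
      using assms(2) by (auto simp: NB_def intro!: exI[of _ "{x}"])
  qed
  moreover have "S \<subseteq> \<Union>U"
  proof
    fix g assume "g \<in> S"
    then have "g \<in> {h \<in> Sym X. h x = g x}" "g x \<in> X" using S Sym_in[of g X x] assms(2) by auto
    then show "g \<in> \<Union>U" unfolding U_def by blast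
  qed
  ultimately obtain F where F: "finite F" "F \<subseteq> U" "S \<subseteq> \<Union>F"
    using assms(1) unfolding compactin_def by meson
  then obtain Y where Y: "Y \<subseteq> X" "finite Y" "F = (\<lambda>y. {g \<in> Sym X. g x = y}) ` Y"
    unfolding U_def by (meson finite_subset_image)
  have "(\<lambda>g. g x) ` S \<subseteq> Y" using F(3) Y(3) by blast
  then show ?thesis using Y(2) finite_subset by blast
qed

lemma orbits_compact:
  assumes S: "closedin (perm_top X) S"
    and fin: "\<And>x. x \<in> X \<Longrightarrow> finite ((\<lambda>g. g x) ` S)"
    and fininv: "\<And>x. x \<in> X \<Longrightarrow> finite ((\<lambda>g. inv g x) ` S)"
  shows "compactin (perm_top X) S"
proof -
  have SS: "S \<subseteq> Sym X" using S by (simp add: closedin_perm_top)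
  have Scl: "\<And>f. f \<in> Sym X \<Longrightarrow> (\<And>F. finite F \<Longrightarrow> F \<subseteq> X \<Longrightarrow> \<exists>g\<in>S. \<forall>x\<in>F. g x = f x) \<Longrightarrow> f \<in> S"
    using S unfolding closedin_perm_top by blast
  define P where "P = product_topology (\<lambda>_. discrete_topology X) X"
  define Orb where "Orb = (\<lambda>x. (\<lambda>g. g x) ` S)"
  define K where "K = (\<lambda>g. restrict g X) ` S"
  define \<psi> where "\<psi> = (\<lambda>k x. if x \<in> X then k x else x)"
  define cyl where "cyl = (\<lambda>k F. PiE X (\<lambda>i. if i \<in> F then {k i} else X))"
  have tP: "topspace P = PiE X (\<lambda>_. X)" by (simp add: P_def)
  have OX: "Orb x \<subseteq> X" if "x \<in> X" for x
  proof
    fix y assume "y \<in> Orb x"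
    then obtain g where "g \<in> S" "y = g x" unfolding Orb_def by blast
    then show "y \<in> X" using SS Sym_in[of g X x] that by auto
  qed
  have cO: "compactin P (PiE X Orb)"
  proof -
    have "compactin (discrete_topology X) (Orb i)" if "i \<in> X" for i
      by (rule finite_imp_compactin) (use OX[OF that] fin[OF that] in \<open>auto simp: Orb_def\<close>)
    then show ?thesis unfolding P_def compactin_PiE by blast
  qed
  have KO: "K \<subseteq> PiE X Orb" unfolding K_def Orb_def by auto
  have KP: "K \<subseteq> topspace P" unfolding tP
  proof
    fix k assume "k \<in> K" then have "k \<in> PiE X Orb" using KO by blast
    then show "k \<in> PiE X (\<lambda>_. X)" using OX by (force simp: PiE_iff)
  qed
  have psiK: "\<psi> (restrict g X) = g" if "g \<in> S" for g
  proof (rule ext)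
    fix x
    have "x \<notin> X \<Longrightarrow> g x = x" using that SS unfolding Sym_def by blast
    then show "\<psi> (restrict g X) x = g x" by (simp add: \<psi>_def)
  qed
  have psiKS: "\<psi> ` K = S" unfolding K_def image_image using psiK by simp
  have cylopen: "openin P (cyl k F)" if "finite F" "F \<subseteq> X" "k \<in> PiE X (\<lambda>_. X)" for k F
  proof -
    have "{i \<in> X. (if i \<in> F then {k i} else X) \<noteq> topspace (discrete_topology X)} \<subseteq> F" by auto
    then show ?thesis unfolding cyl_def P_def openin_PiE_gen using that
      by (auto intro: finite_subset simp: PiE_def Pi_def)
  qed
  have incyl: "k \<in> cyl k F" if "k \<in> PiE X (\<lambda>_. X)" for k F
    using that unfolding cyl_def by (auto simp: PiE_def Pi_def)
  have cylagree: "\<forall>x\<in>F. k' x = k x" if "k' \<in> cyl k F" "F \<subseteq> X" for k k' F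
    using that unfolding cyl_def by (auto simp: PiE_def Pi_def)
  have key: "\<exists>F. finite F \<and> F \<subseteq> X \<and> (\<forall>g\<in>S. \<not>(\<forall>x\<in>F. g x = k x))"
    if k: "k \<in> PiE X (\<lambda>_. X)" "k \<notin> K" for k
  proof (cases "\<psi> k \<in> Sym X")
    case True
    have "restrict (\<psi> k) X = k"
    proof (rule ext)
      fix x show "restrict (\<psi> k) X x = k x"
        using k(1) by (cases "x \<in> X") (simp_all add: \<psi>_def PiE_iff extensional_def)
    qed
    then have "\<psi> k \<notin> S"
    proof -
      assume r: "restrict (\<psi> k) X = k"
      show "\<psi> k \<notin> S"
      proof
        assume "\<psi> k \<in> S"
        then have "restrict (\<psi> k) X \<in> K" unfolding K_def by (rule imageI)
        then show False using r k(2) by simp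
      qed
    qed
    then obtain F where F: "finite F" "F \<subseteq> X" "\<not>(\<exists>g\<in>S. \<forall>x\<in>F. g x = \<psi> k x)"
      using Scl[OF True] by blast
    have "\<forall>x\<in>F. \<psi> k x = k x" using F(2) by (auto simp: \<psi>_def)
    then show ?thesis using F by (intro exI[of _ F]) auto
  next
    case False
    have im: "\<psi> k ` X \<subseteq> X" using k(1) by (auto simp: \<psi>_def)
    have o: "\<forall>x. x \<notin> X \<longrightarrow> \<psi> k x = x" by (simp add: \<psi>_def)
    have "\<not> bij_betw (\<psi> k) X X" using False o unfolding Sym_def by blast
    then have "\<not> inj_on (\<psi> k) X \<or> \<psi> k ` X \<noteq> X" unfolding bij_betw_def by blast
    then have "\<not> inj_on (\<psi> k) X \<or> (\<exists>y\<in>X. y \<notin> \<psi> k ` X)"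
      using im by blast
    then show ?thesis
    proof
      assume "\<not> inj_on (\<psi> k) X"
      then obtain a b where ab0: "a \<in> X" "b \<in> X" "a \<noteq> b" "\<psi> k a = \<psi> k b"
        unfolding inj_on_def by blast
      then have ab: "a \<in> X" "b \<in> X" "a \<noteq> b" "k a = k b" by (simp_all add: \<psi>_def)
      show ?thesis
      proof (intro exI[of _ "{a,b}"] conjI ballI notI)
        fix g assume "g \<in> S" "\<forall>x\<in>{a, b}. g x = k x"
        then have "g a = g b" using ab by simp
        moreover have "inj g" using Sym_bij[of g X] SS \<open>g \<in> S\<close> by (auto simp: bij_def)
        ultimately show False using ab(3) by (simp add: inj_eq)
      qed (use ab in auto)
    next
      assume "\<exists>y\<in>X. y \<notin> \<psi> k ` X"
      then obtain y where y: "y \<in> X" "y \<notin> \<psi> k ` X" by blast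
      show ?thesis
      proof (intro exI[of _ "(\<lambda>g. inv g y) ` S"] conjI ballI notI)
        show "finite ((\<lambda>g. inv g y) ` S)" using fininv y by blast
        show "(\<lambda>g. inv g y) ` S \<subseteq> X" using SS y by (auto intro!: Sym_inv_in)
        fix g assume g: "g \<in> S" "\<forall>x\<in>(\<lambda>g. inv g y) ` S. g x = k x"
        then have "k (inv g y) = g (inv g y)" by auto
        also have "\<dots> = y" using Sym_bij[of g X] g(1) SS by (auto simp: bij_def surj_f_inv_f)
        finally have "\<psi> k (inv g y) = y" using Sym_inv_in[of g X y] g SS y by (auto simp: \<psi>_def)
        moreover have "inv g y \<in> X" using Sym_inv_in[of g X y] g(1) SS y by blast
        ultimately show False using y(2) by (metis imageI)
      qed
    qed
  qed
  have closedK: "closedin P K"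
    unfolding closedin_def
  proof (intro conjI KP openin_subopen[THEN iffD2] ballI)
    fix k assume "k \<in> topspace P - K"
    then have k: "k \<in> PiE X (\<lambda>_. X)" "k \<notin> K" using tP by auto
    obtain F where F: "finite F" "F \<subseteq> X" "\<forall>g\<in>S. \<not>(\<forall>x\<in>F. g x = k x)" using key[OF k] by blast
    have "cyl k F \<subseteq> topspace P - K"
    proof
      fix k' assume k': "k' \<in> cyl k F"
      have "k' \<in> topspace P" using k' tP k(1) unfolding cyl_def by (force simp: PiE_iff split: if_splits)
      moreover have "k' \<notin> K"
      proof
        assume "k' \<in> K"
        then obtain g where g: "g \<in> S" "k' = restrict g X" unfolding K_def by blast
        have "\<forall>x\<in>F. g x = k x" using cylagree[OF k' F(2)] g F(2) by (auto simp: subset_iff)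
        then show False using F(3) g(1) by blast
      qed
      ultimately show "k' \<in> topspace P - K" by blast
    qed
    then show "\<exists>T. openin P T \<and> k \<in> T \<and> T \<subseteq> topspace P - K"
      using cylopen[OF F(1,2) k(1)] incyl[OF k(1)] by blast
  qed
  have cK: "compactin P K" using closed_compactin[OF cO KO closedK] .
  have cont: "continuous_map (subtopology P K) (perm_top X) \<psi>"
    unfolding continuous_map_def
  proof (intro conjI allI impI)
    have tK: "topspace (subtopology P K) = K" using KP by auto
    show "\<psi> \<in> topspace (subtopology P K) \<rightarrow> topspace (perm_top X)"
    proof
      fix k assume "k \<in> topspace (subtopology P K)"
      then have "\<psi> k \<in> S" using tK psiKS by blast
      then show "\<psi> k \<in> topspace (perm_top X)" using SS topspace_perm_top by blast
    qed
    fix U assume U: "openin (perm_top X) U"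
    have "\<forall>k\<in>{k\<in>K. \<psi> k \<in> U}. \<exists>F. finite F \<and> F \<subseteq> X \<and> NB X (\<psi> k) F \<subseteq> U"
      using U unfolding openin_perm_top by blast
    then obtain FF where FF0: "\<forall>k\<in>{k\<in>K. \<psi> k \<in> U}. finite (FF k) \<and> FF k \<subseteq> X \<and> NB X (\<psi> k) (FF k) \<subseteq> U"
      by (rule bchoice[THEN exE]) blast
    have FF: "\<And>k. k \<in> {k\<in>K. \<psi> k \<in> U} \<Longrightarrow> finite (FF k) \<and> FF k \<subseteq> X \<and> NB X (\<psi> k) (FF k) \<subseteq> U"
      using FF0 by blast
    define W where "W = (\<Union>k\<in>{k\<in>K. \<psi> k \<in> U}. cyl k (FF k))"
    have "openin P W" unfolding W_def
    proof (rule openin_Union)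
      fix T assume "T \<in> (\<lambda>k. cyl k (FF k)) ` {k\<in>K. \<psi> k \<in> U}"
      then obtain k where k: "k \<in> {k\<in>K. \<psi> k \<in> U}" "T = cyl k (FF k)" by blast
      have "k \<in> PiE X (\<lambda>_. X)" using k(1) KP tP by blast
      then show "openin P T" using k(2) FF[OF k(1)] cylopen by blast
    qed
    moreover have "{x \<in> topspace (subtopology P K). \<psi> x \<in> U} = W \<inter> K"
    proof
      show "{x \<in> topspace (subtopology P K). \<psi> x \<in> U} \<subseteq> W \<inter> K"
      proof
        fix k assume "k \<in> {x \<in> topspace (subtopology P K). \<psi> x \<in> U}"
        then have k: "k \<in> K" "\<psi> k \<in> U" using tK by auto
        then have "k \<in> cyl k (FF k)" using incyl KP tP by blast
        then show "k \<in> W \<inter> K" using k unfolding W_def by blast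
      qed
      show "W \<inter> K \<subseteq> {x \<in> topspace (subtopology P K). \<psi> x \<in> U}"
      proof
        fix k' assume "k' \<in> W \<inter> K"
        then obtain k where k: "k \<in> K" "\<psi> k \<in> U" "k' \<in> cyl k (FF k)" "k' \<in> K" unfolding W_def by blast
        have F: "finite (FF k)" "FF k \<subseteq> X" "NB X (\<psi> k) (FF k) \<subseteq> U" using FF k by auto
        have "\<psi> k' \<in> S" using k(4) psiKS by blast
        then have "\<psi> k' \<in> Sym X" using SS by blast
        moreover have "\<forall>x\<in>FF k. \<psi> k' x = \<psi> k x" using cylagree[OF k(3) F(2)] F(2) by (auto simp: \<psi>_def)
        ultimately have "\<psi> k' \<in> U" using F(3) unfolding NB_def by blast
        then show "k' \<in> {x \<in> topspace (subtopology P K). \<psi> x \<in> U}" using tK k(4) by blast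
      qed
    qed
    ultimately show "openin (subtopology P K) {x \<in> topspace (subtopology P K). \<psi> x \<in> U}"
      unfolding openin_subtopology by blast
  qed
  have "compactin (subtopology P K) K" using cK by (simp add: compactin_subtopology)
  from image_compactin[OF this cont] show ?thesis using psiKS by simp
qed




lemma tree_edge_V: "is_tree V E \<Longrightarrow> E x y \<Longrightarrow> x \<in> V \<and> y \<in> V"
  unfolding is_tree_def by blast

lemma tree_sym: "is_tree V E \<Longrightarrow> E x y \<Longrightarrow> E y x"
  unfolding is_tree_def by blast

lemma tree_irrefl: "is_tree V E \<Longrightarrow> \<not> E x x"
  unfolding is_tree_def by blast

lemma tree_common:
  assumes T: "is_tree V E" and e: "E w a" "E w b" "E z a" "E z b" and ab: "a \<noteq> b"
  shows "w = z"
proof (rule ccontr)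
  assume wz: "w \<noteq> z"
  define xs where "xs = [w, a, z, b]"
  have V: "w \<in> V" "a \<in> V" "z \<in> V" "b \<in> V" using tree_edge_V[OF T] e by blast+
  have ne: "w \<noteq> a" "w \<noteq> b" "z \<noteq> a" "z \<noteq> b" using e tree_irrefl[OF T] by metis+
  have edges: "E (xs ! i) (xs ! Suc i)" if "Suc i < length xs" for i
  proof -
    have "i = 0 \<or> i = 1 \<or> i = 2" using that unfolding xs_def by auto
    then show ?thesis using e tree_sym[OF T] unfolding xs_def by auto
  qed
  have "walk_in V E xs" unfolding walk_in_def using V edges unfolding xs_def by auto
  moreover have "distinct xs" unfolding xs_def using ne ab wz by auto
  moreover have "E (last xs) (hd xs)" unfolding xs_def using e tree_sym[OF T] by auto
  ultimately have "is_cycle V E xs" unfolding is_cycle_def xs_def by auto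
  then show False using T unfolding is_tree_def by blast
qed

lemma tree_has_nb:
  assumes T: "is_tree V E" and "v \<in> V" "u \<in> V" "u \<noteq> v"
  shows "\<exists>w. E v w"
proof -
  obtain xs where xs: "walk_in V E xs" "hd xs = v" "last xs = u"
    using T assms unfolding is_tree_def by blast
  have ne: "xs \<noteq> []" using xs unfolding walk_in_def by auto
  have "length xs \<noteq> 1"
  proof
    assume "length xs = 1"
    then obtain y where "xs = [y]" by (cases xs) auto
    then show False using xs assms by auto
  qed
  then have "Suc 0 < length xs" using ne by (cases xs) auto
  then have "E (xs ! 0) (xs ! Suc 0)" using xs unfolding walk_in_def by blast
  moreover have "xs ! 0 = v" using xs ne by (simp add: hd_conv_nth)
  ultimately show ?thesis by blast
qed

lemma tree_two_nb:
  assumes T: "is_tree V E" and nl: "\<forall>v\<in>V. \<not> (\<exists>w. nbhd V E v = {w})"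
    and "v \<in> V" "u \<in> V" "u \<noteq> v"
  shows "\<exists>a b. a \<noteq> b \<and> E v a \<and> E v b"
proof -
  obtain a where a: "E v a" using tree_has_nb[OF T assms(3-5)] by blast
  then have "a \<in> nbhd V E v" using tree_edge_V[OF T a] unfolding nbhd_def by blast
  moreover have "nbhd V E v \<noteq> {a}" using nl assms(3) by blast
  ultimately obtain b where "b \<in> nbhd V E v" "b \<noteq> a" by blast
  then show ?thesis using a unfolding nbhd_def by blast
qed

lemma subsingleton_finite: "\<forall>c\<in>C. \<forall>c'\<in>C. c = c' \<Longrightarrow> finite C"
proof (cases "C = {}")
  case False
  assume h: "\<forall>c\<in>C. \<forall>c'\<in>C. c = c'"
  then obtain c where "c \<in> C" using False by blast
  then have "C \<subseteq> {c}" using h by blast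
  then show ?thesis using finite_subset by blast
qed simp

lemma Aut_Sym: "g \<in> Aut V E \<Longrightarrow> g \<in> Sym V"
  unfolding Aut_def by blast

lemma Aut_edge: "g \<in> Aut V E \<Longrightarrow> x \<in> V \<Longrightarrow> y \<in> V \<Longrightarrow> E x y \<longleftrightarrow> E (g x) (g y)"
  unfolding Aut_def by blast

lemma Aut_common:
  assumes T: "is_tree V E" and g1: "g1 \<in> Aut V E" and g2: "g2 \<in> Aut V E"
    and e: "E w a" "E w b" and ab: "a \<noteq> b" and eq: "g1 a = g2 a" "g1 b = g2 b"
  shows "g1 w = g2 w"
proof -
  have V: "w \<in> V" "a \<in> V" "b \<in> V" using tree_edge_V[OF T] e by blast+
  have e1: "E (g1 w) (g1 a)" "E (g1 w) (g1 b)" using Aut_edge[OF g1] V e by blast+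
  have e2: "E (g2 w) (g2 a)" "E (g2 w) (g2 b)" using Aut_edge[OF g2] V e by blast+
  have "inj g1" using Sym_bij[OF Aut_Sym[OF g1]] by (simp add: bij_def)
  then have "g1 a \<noteq> g1 b" using ab by (simp add: inj_eq)
  then show ?thesis using tree_common[OF T e1 _ _] e2 eq by metis
qed




lemma restr_Sym:
  assumes "bij g" "g ` A = A"
  shows "restr A g \<in> Sym A"
proof -
  have "inj_on (restr A g) A"
    using assms(1) unfolding restr_def inj_on_def bij_def by (auto simp: inj_eq)
  moreover have "restr A g ` A = A" using assms(2) unfolding restr_def by auto
  ultimately show ?thesis unfolding Sym_def bij_betw_def restr_def by auto
qed

lemma closed_sub_char:
  assumes "closedin (subtopology (perm_top V) (Aut V E)) G"
  shows "G \<subseteq> Aut V E"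
    and "\<And>f. f \<in> Aut V E \<Longrightarrow> (\<And>F. finite F \<Longrightarrow> F \<subseteq> V \<Longrightarrow> \<exists>g\<in>G. \<forall>x\<in>F. g x = f x) \<Longrightarrow> f \<in> G"
proof -
  obtain T where T: "closedin (perm_top V) T" "G = T \<inter> Aut V E"
    using assms unfolding closedin_subtopology by blast
  show "G \<subseteq> Aut V E" using T by blast
  fix f assume f: "f \<in> Aut V E" and ap: "\<And>F. finite F \<Longrightarrow> F \<subseteq> V \<Longrightarrow> \<exists>g\<in>G. \<forall>x\<in>F. g x = f x"
  have "f \<in> T"
    using T(1) unfolding closedin_perm_top
  proof (elim conjE)
    assume "\<forall>f\<in>Sym V. (\<forall>F. finite F \<and> F \<subseteq> V \<longrightarrow> (\<exists>g\<in>T. \<forall>x\<in>F. g x = f x)) \<longrightarrow> f \<in> T"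
    moreover have "f \<in> Sym V" using f by (rule Aut_Sym)
    moreover have "\<forall>F. finite F \<and> F \<subseteq> V \<longrightarrow> (\<exists>g\<in>T. \<forall>x\<in>F. g x = f x)"
      using ap T(2) by blast
    ultimately show "f \<in> T" by blast
  qed
  then show "f \<in> G" using T(2) f by blast
qed




lemma induced_closed:
  fixes V :: "'v set" and E A B G
  assumes T: "is_tree V E"
    and nl: "\<forall>v\<in>V. \<not> (\<exists>w. nbhd V E v = {w})"
    and bip: "A \<union> B = V" "A \<inter> B = {}"
      "\<forall>x y. E x y \<longrightarrow> (x \<in> A \<and> y \<in> B) \<or> (x \<in> B \<and> y \<in> A)"
    and sub: "is_subgroup G (Aut V E)"
    and closed: "closedin (subtopology (perm_top V) (Aut V E)) G"
    and fix12: "\<forall>g\<in>G. g ` A = A \<and> g ` B = B"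
  shows "closedin (perm_top A) (induced G A)"
proof -
  have GA: "G \<subseteq> Aut V E" using closed_sub_char(1)[OF closed] .
  note Gcl = closed_sub_char(2)[OF closed]
  have gbij: "bij g" if "g \<in> G" for g
  proof -
    have "g \<in> Aut V E" using that GA by blast
    then have "g \<in> Sym V" by (rule Aut_Sym)
    then show ?thesis by (rule Sym_bij)
  qed
  have idG: "id \<in> G" using sub unfolding is_subgroup_def by blast
  have indsub: "induced G A \<subseteq> Sym A"
  proof
    fix h assume "h \<in> induced G A"
    then obtain g where "g \<in> G" "h = restr A g" unfolding induced_def by blast
    moreover have "g ` A = A" using fix12 \<open>g \<in> G\<close> by blast
    ultimately show "h \<in> Sym A" using restr_Sym[OF gbij[OF \<open>g \<in> G\<close>]] by simp
  qed
  show ?thesis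
  proof (rule closedin_perm_top[THEN iffD2], rule conjI[OF indsub], intro ballI impI)
    fix f assume fS: "f \<in> Sym A"
      and ap0: "\<forall>F. finite F \<and> F \<subseteq> A \<longrightarrow> (\<exists>g\<in>induced G A. \<forall>x\<in>F. g x = f x)"
    have ap: "\<exists>g\<in>G. \<forall>x\<in>F. g x = f x" if "finite F" "F \<subseteq> A" for F
    proof -
      have "\<exists>g\<in>induced G A. \<forall>x\<in>F. g x = f x" using ap0 that by simp
      then obtain g' where g': "g' \<in> induced G A" "\<forall>x\<in>F. g' x = f x" by (elim bexE)
      then obtain g where g: "g \<in> G" "g' = restr A g" unfolding induced_def by (elim imageE)
      have "g x = f x" if "x \<in> F" for x
      proof -
        have "x \<in> A" using that \<open>F \<subseteq> A\<close> by blast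
        then have "g x = g' x" using g(2) unfolding restr_def by simp
        then show ?thesis using g'(2) that by simp
      qed
      then show ?thesis using g(1) by blast
    qed
    have fout0: "\<forall>x. x \<notin> A \<longrightarrow> f x = x" using fS unfolding Sym_def by simp
    have fout: "f x = x" if "x \<notin> A" for x using fout0 that by simp
    show "f \<in> induced G A"
    proof (cases "A = {}")
      case True
      have "restr A id = f" using fout True unfolding restr_def by auto
      then show ?thesis using idG unfolding induced_def by blast
    next
      case False
      then obtain a0 where a0: "a0 \<in> A" by blast
      have bipE: "(x \<in> A \<and> y \<in> B) \<or> (x \<in> B \<and> y \<in> A)" if "E x y" for x y
        using bip(3) that by simp
      have AV: "x \<in> V" if "x \<in> A" for x using bip(1) that by blast
      have BV: "x \<in> V" if "x \<in> B" for x using bip(1) that by blast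
      have AB: "x \<notin> B" if "x \<in> A" for x using bip(2) that by blast
      have VAB: "x \<in> A \<or> x \<in> B" if "x \<in> V" for x using bip(1) that by blast
      have nbA: "y \<in> A" if "w \<in> B" "E w y" for w y
      proof -
        have "(w \<in> A \<and> y \<in> B) \<or> (w \<in> B \<and> y \<in> A)" using bipE[OF that(2)] .
        then show ?thesis using AB that(1) by blast
      qed
      have nbB: "y \<in> B" if "w \<in> A" "E w y" for w y
      proof -
        have "(w \<in> A \<and> y \<in> B) \<or> (w \<in> B \<and> y \<in> A)" using bipE[OF that(2)] .
        then show ?thesis using AB that(1) by blast
      qed
      have twonb: "\<exists>a b. a \<noteq> b \<and> E w a \<and> E w b" if "w \<in> B" for w
      proof (rule tree_two_nb[OF T nl])
        show "w \<in> V" using BV[OF that] .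
        show "a0 \<in> V" using AV[OF a0] .
        show "a0 \<noteq> w" using AB[OF a0] that by metis
      qed
      have "\<forall>w\<in>B. \<exists>p. fst p \<noteq> snd p \<and> E w (fst p) \<and> E w (snd p)"
      proof
        fix w assume "w \<in> B"
        then obtain a b where "a \<noteq> b \<and> E w a \<and> E w b" using twonb by blast
        then show "\<exists>p. fst p \<noteq> snd p \<and> E w (fst p) \<and> E w (snd p)" by (intro exI[of _ "(a,b)"]) simp
      qed
      then obtain p where p: "\<forall>w\<in>B. fst (p w) \<noteq> snd (p w) \<and> E w (fst (p w)) \<and> E w (snd (p w))"
        by (rule bchoice[THEN exE]) blast
      define pa where "pa = (\<lambda>w. fst (p w))"
      define pb where "pb = (\<lambda>w. snd (p w))"
      have pab: "pa w \<noteq> pb w" "E w (pa w)" "E w (pb w)" if "w \<in> B" for w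
        using p that unfolding pa_def pb_def by auto
      have pabA: "pa w \<in> A" "pb w \<in> A" if "w \<in> B" for w
        using nbA[OF that pab(2)[OF that]] nbA[OF that pab(3)[OF that]] by auto
      define gw where "gw = (\<lambda>w. SOME g. g \<in> G \<and> g (pa w) = f (pa w) \<and> g (pb w) = f (pb w))"
      have gw: "gw w \<in> G \<and> gw w (pa w) = f (pa w) \<and> gw w (pb w) = f (pb w)" if "w \<in> B" for w
      proof -
        have "finite {pa w, pb w}" by simp
        moreover have "{pa w, pb w} \<subseteq> A" using pabA[OF that] by simp
        ultimately obtain g where "g \<in> G" "\<forall>x\<in>{pa w, pb w}. g x = f x" using ap[of "{pa w, pb w}"] by blast
        then have "\<exists>g. g \<in> G \<and> g (pa w) = f (pa w) \<and> g (pb w) = f (pb w)" by auto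
        then show ?thesis unfolding gw_def by (rule someI_ex)
      qed
      define fh where "fh = (\<lambda>x. if x \<in> A then f x else if x \<in> B then gw x x else x)"
      have fhA: "fh x = f x" if "x \<in> A" for x using that unfolding fh_def by simp
      have fhB: "fh x = gw x x" if "x \<in> B" for x using that AB unfolding fh_def by auto
      have fhout: "fh x = x" if "x \<notin> V" for x using that AV BV unfolding fh_def by auto
      have GAut: "g \<in> Aut V E" if "g \<in> G" for g using that GA by (rule subsetD[rotated])
      have key: "g w = fh w" if w: "w \<in> B" and g: "g \<in> G" and ab: "a \<noteq> b" "E w a" "E w b"
        and eq: "g a = f a" "g b = f b" for w g a b
      proof -
        have inA: "a \<in> A" "b \<in> A" using nbA[OF w ab(2)] nbA[OF w ab(3)] by auto
        have "finite {a, b, pa w, pb w}" by simp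
        moreover have "{a, b, pa w, pb w} \<subseteq> A" using inA pabA[OF w] by simp
        ultimately obtain g' where g': "g' \<in> G" "\<forall>x\<in>{a, b, pa w, pb w}. g' x = f x"
          using ap[of "{a, b, pa w, pb w}"] by blast
        have "g w = g' w"
        proof (rule Aut_common[OF T GAut[OF g] GAut[OF g'(1)] ab(2,3) ab(1)])
          show "g a = g' a" using eq g'(2) by simp
          show "g b = g' b" using eq g'(2) by simp
        qed
        also have "g' w = gw w w"
        proof (rule Aut_common[OF T GAut[OF g'(1)] GAut[of "gw w"] pab(2,3)[OF w] pab(1)[OF w]])
          show "gw w \<in> G" using gw[OF w] by simp
          show "g' (pa w) = gw w (pa w)" using gw[OF w] g'(2) by simp
          show "g' (pb w) = gw w (pb w)" using gw[OF w] g'(2) by simp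
        qed
        also have "gw w w = fh w" using fhB[OF w] by simp
        finally show ?thesis .
      qed
      have fhap: "\<exists>g\<in>G. \<forall>x\<in>F. g x = fh x" if F: "finite F" "F \<subseteq> V" for F
      proof -
        define F' where "F' = (F \<inter> A) \<union> pa ` (F \<inter> B) \<union> pb ` (F \<inter> B)"
        have "finite F'" unfolding F'_def using F(1) by simp
        moreover have "F' \<subseteq> A" unfolding F'_def using pabA by auto
        ultimately obtain g where g: "g \<in> G" "\<forall>x\<in>F'. g x = f x" using ap[of F'] by blast
        have "g x = fh x" if x: "x \<in> F" for x
        proof (cases "x \<in> A")
          case True
          then have "x \<in> F'" using x unfolding F'_def by simp
          then show ?thesis using g(2) fhA[OF True] by simp
        next
          case False
          then have xB: "x \<in> B" using VAB F(2) x by blast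
          have "pa x \<in> F'" "pb x \<in> F'" using x xB unfolding F'_def by auto
          then have "g (pa x) = f (pa x)" "g (pb x) = f (pb x)" using g(2) by auto
          then show ?thesis using key[OF xB g(1) pab[OF xB]] by simp
        qed
        then show ?thesis using g(1) by blast
      qed
      have fhAut: "fh \<in> Aut V E"
      proof -
        have out: "\<forall>x. x \<notin> V \<longrightarrow> fh x = x" using fhout by simp
        have inV: "fh x \<in> V" if "x \<in> V" for x
        proof -
          have "finite {x}" "{x} \<subseteq> V" using that by auto
          then obtain g where "g \<in> G" "\<forall>y\<in>{x}. g y = fh y" using fhap[of "{x}"] by blast
          then have "fh x = g x" by simp
          moreover have "g \<in> Sym V" using Aut_Sym[OF GAut[OF \<open>g \<in> G\<close>]] .
          ultimately show ?thesis using Sym_in[of g V x] that by simp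
        qed
        have inj: "inj_on fh V"
        proof (rule inj_onI)
          fix x y assume xy: "x \<in> V" "y \<in> V" "fh x = fh y"
          have "finite {x,y}" "{x,y} \<subseteq> V" using xy by auto
          then obtain g where g: "g \<in> G" "\<forall>z\<in>{x,y}. g z = fh z" using fhap[of "{x,y}"] by blast
          then have "g x = g y" using xy by auto
          then show "x = y" using gbij[OF g(1)] by (simp add: bij_def inj_eq)
        qed
        have fA: "f ` A = A" using fS unfolding Sym_def bij_betw_def by simp
        have surj: "y \<in> fh ` V" if y: "y \<in> V" for y
        proof (cases "y \<in> A")
          case True
          then have "y \<in> f ` A" using fA by simp
          then obtain x where x: "x \<in> A" "y = f x" by (elim imageE)
          then have "fh x = y" using fhA by simp
          then show ?thesis using AV[OF x(1)] by (metis imageI)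
        next
          case False
          then have yB: "y \<in> B" using y VAB by blast
          obtain c d where cd: "c \<noteq> d" "E y c" "E y d" using twonb[OF yB] by blast
          have "c \<in> f ` A" "d \<in> f ` A" using nbA[OF yB cd(2)] nbA[OF yB cd(3)] fA by auto
          then obtain a b where ab: "a \<in> A" "b \<in> A" "c = f a" "d = f b" by (elim imageE)
          have "a \<noteq> b" using ab cd by metis
          have "finite {a,b}" "{a,b} \<subseteq> A" using ab by auto
          then obtain g where g: "g \<in> G" "\<forall>z\<in>{a,b}. g z = f z" using ap[of "{a,b}"] by blast
          have gS: "g \<in> Sym V" using Aut_Sym[OF GAut[OF g(1)]] .
          then have "g ` V = V" unfolding Sym_def bij_betw_def by simp
          then have "y \<in> g ` V" using y by simp
          then obtain x where x: "x \<in> V" "y = g x" by (elim imageE)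
          have abV: "a \<in> V" "b \<in> V" using AV ab by auto
          have gab: "g a = c" "g b = d" using g(2) ab by auto
          have "E (g x) (g a)" "E (g x) (g b)" using x cd gab by auto
          then have exab: "E x a" "E x b" using Aut_edge[OF GAut[OF g(1)]] x(1) abV by blast+
          have xB: "x \<in> B" using nbB[OF ab(1) tree_sym[OF T exab(1)]] .
          have "g x = fh x" using key[OF xB g(1) \<open>a \<noteq> b\<close> exab] g(2) by simp
          then show ?thesis using x by (metis imageI)
        qed
        have "fh ` V = V" using inV surj by blast
        then have "bij_betw fh V V" unfolding bij_betw_def using inj by simp
        then have "fh \<in> Sym V" using out unfolding Sym_def by simp
        moreover have "\<forall>x\<in>V. \<forall>y\<in>V. E x y \<longleftrightarrow> E (fh x) (fh y)"
        proof (intro ballI)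
          fix x y assume xy: "x \<in> V" "y \<in> V"
          have "finite {x,y}" "{x,y} \<subseteq> V" using xy by auto
          then obtain g where g: "g \<in> G" "\<forall>z\<in>{x,y}. g z = fh z" using fhap[of "{x,y}"] by blast
          have "E x y \<longleftrightarrow> E (g x) (g y)" using Aut_edge[OF GAut[OF g(1)] xy] .
          then show "E x y \<longleftrightarrow> E (fh x) (fh y)" using g(2) by simp
        qed
        ultimately show ?thesis unfolding Aut_def by simp
      qed
      have fhG: "fh \<in> G" using Gcl[OF fhAut fhap] .
      have "restr A fh = f"
      proof (rule ext)
        fix x show "restr A fh x = f x"
        proof (cases "x \<in> A")
          case True then show ?thesis using fhA unfolding restr_def by simp
        next
          case False then show ?thesis using fout unfolding restr_def by simp
        qed
      qed
      then show ?thesis using fhG unfolding induced_def by blast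
    qed
  qed
qed




lemma sub_facts:
  assumes "is_subgroup G (Aut V E)"
  shows "G \<subseteq> Aut V E" "\<And>g. g \<in> G \<Longrightarrow> bij g" "\<And>g. g \<in> G \<Longrightarrow> inv g \<in> G"
    "\<And>g h. g \<in> G \<Longrightarrow> h \<in> G \<Longrightarrow> g \<circ> h \<in> G"
proof -
  show GA: "G \<subseteq> Aut V E" using assms unfolding is_subgroup_def by simp
  fix g assume g: "g \<in> G"
  then have "g \<in> Aut V E" using GA by (rule subsetD[rotated])
  then show "bij g" by (intro Sym_bij[of g V] Aut_Sym)
  show "inv g \<in> G" using assms g unfolding is_subgroup_def by simp
  fix h assume "h \<in> G"
  then show "g \<circ> h \<in> G" using assms g unfolding is_subgroup_def by simp
qed

lemma inv_fix: "bij g \<Longrightarrow> g v = v \<Longrightarrow> inv g v = v"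
  by (metis bij_def inv_f_f)

lemma nbhd_aut:
  assumes g: "g \<in> Aut V E" and v: "v \<in> V"
  shows "g ` nbhd V E v = nbhd V E (g v)"
proof
  have gS: "g \<in> Sym V" using g by (rule Aut_Sym)
  show "g ` nbhd V E v \<subseteq> nbhd V E (g v)"
  proof
    fix y assume "y \<in> g ` nbhd V E v"
    then obtain w where w: "w \<in> V" "E v w" "y = g w" unfolding nbhd_def by blast
    have "g w \<in> V" using Sym_in[OF gS w(1)] .
    moreover have "E (g v) (g w)" using Aut_edge[OF g v w(1)] w(2) by simp
    ultimately show "y \<in> nbhd V E (g v)" using w(3) unfolding nbhd_def by simp
  qed
  show "nbhd V E (g v) \<subseteq> g ` nbhd V E v"
  proof
    fix y assume "y \<in> nbhd V E (g v)"
    then have y: "y \<in> V" "E (g v) y" unfolding nbhd_def by auto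
    have "g ` V = V" using gS unfolding Sym_def bij_betw_def by simp
    then have "y \<in> g ` V" using y(1) by simp
    then obtain w where w: "w \<in> V" "y = g w" by (elim imageE)
    have "E v w" using Aut_edge[OF g v w(1)] y(2) w(2) by simp
    then have "w \<in> nbhd V E v" using w(1) unfolding nbhd_def by simp
    then show "y \<in> g ` nbhd V E v" using w(2) by simp
  qed
qed

lemma stab_induced: "u \<in> A \<Longrightarrow> stab (induced H A) u = induced (stab H u) A"
  unfolding stab_def induced_def restr_def by auto

lemma inv_restr:
  assumes "bij g" "g ` A = A" "y \<in> A"
  shows "inv (restr A g) y = inv g y"
proof -
  have "restr A g \<in> Sym A" using restr_Sym[OF assms(1,2)] .
  then have ir: "inj (restr A g)" using Sym_bij by (auto simp: bij_def)
  have "y \<in> g ` A" using assms by simp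
  then obtain z where z: "z \<in> A" "y = g z" by (elim imageE)
  have "inv g y = z" using z assms(1) by (simp add: bij_def inv_f_f)
  moreover have "restr A g z = y" using z unfolding restr_def by simp
  ultimately show ?thesis using ir by (simp add: inv_f_eq)
qed

lemma closed_stab:
  assumes "closedin (perm_top X) S" "u \<in> X"
  shows "closedin (perm_top X) (stab S u)"
proof -
  have SS: "S \<subseteq> Sym X" and Scl: "\<forall>f\<in>Sym X. (\<forall>F. finite F \<and> F \<subseteq> X \<longrightarrow> (\<exists>g\<in>S. \<forall>x\<in>F. g x = f x)) \<longrightarrow> f \<in> S"
    using assms(1) unfolding closedin_perm_top by auto
  show ?thesis unfolding closedin_perm_top
  proof (intro conjI ballI impI)
    show "stab S u \<subseteq> Sym X" using SS unfolding stab_def by blast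
    fix f assume f: "f \<in> Sym X" and ap: "\<forall>F. finite F \<and> F \<subseteq> X \<longrightarrow> (\<exists>g\<in>stab S u. \<forall>x\<in>F. g x = f x)"
    have "\<forall>F. finite F \<and> F \<subseteq> X \<longrightarrow> (\<exists>g\<in>S. \<forall>x\<in>F. g x = f x)"
      using ap unfolding stab_def by blast
    then have "f \<in> S" using Scl f by blast
    moreover have "\<exists>g\<in>stab S u. \<forall>x\<in>{u}. g x = f x" using ap assms(2) by (meson empty_subsetI finite.emptyI finite.insertI insert_subset)
    then have "f u = u" unfolding stab_def by auto
    ultimately show "f \<in> stab S u" unfolding stab_def by simp
  qed
qed

lemma compact_induced_iff:
  assumes hb: "\<And>g. g \<in> H \<Longrightarrow> bij g" and hA: "\<And>g. g \<in> H \<Longrightarrow> g ` A = A"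
    and hi: "\<And>g. g \<in> H \<Longrightarrow> inv g \<in> H" and cl: "closedin (perm_top A) (induced H A)"
  shows "compactin (perm_top A) (induced H A) \<longleftrightarrow> (\<forall>y\<in>A. finite ((\<lambda>g. g y) ` H))"
proof -
  have orb: "(\<lambda>h. h y) ` induced H A = (\<lambda>g. g y) ` H" if "y \<in> A" for y
    using that unfolding induced_def restr_def by (auto simp: image_iff)
  have iorb: "(\<lambda>h. inv h y) ` induced H A \<subseteq> (\<lambda>g. g y) ` H" if "y \<in> A" for y
  proof
    fix z assume "z \<in> (\<lambda>h. inv h y) ` induced H A"
    then obtain g where g: "g \<in> H" "z = inv (restr A g) y" unfolding induced_def by auto
    then have "z = inv g y" using inv_restr[OF hb[OF g(1)] hA[OF g(1)] that] by simp
    then show "z \<in> (\<lambda>g. g y) ` H" using hi[OF g(1)] by simp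
  qed
  show ?thesis
  proof
    assume c: "compactin (perm_top A) (induced H A)"
    show "\<forall>y\<in>A. finite ((\<lambda>g. g y) ` H)"
      using compact_orbit_finite[OF c] orb by simp
  next
    assume f: "\<forall>y\<in>A. finite ((\<lambda>g. g y) ` H)"
    show "compactin (perm_top A) (induced H A)"
    proof (rule orbits_compact[OF cl])
      fix x assume "x \<in> A"
      then show "finite ((\<lambda>g. g x) ` induced H A)" using orb f by simp
      show "finite ((\<lambda>g. inv g x) ` induced H A)"
        using iorb[OF \<open>x \<in> A\<close>] f \<open>x \<in> A\<close> finite_subset by blast
    qed
  qed
qed




lemma walk_snoc:
  assumes "walk_in V E (xs @ [z])" "xs \<noteq> []"
  shows "walk_in V E xs" "E (last xs) z" "z \<in> V"
proof -
  have w: "set (xs @ [z]) \<subseteq> V" "\<forall>i. Suc i < length (xs @ [z]) \<longrightarrow> E ((xs @ [z]) ! i) ((xs @ [z]) ! Suc i)"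
    using assms(1) unfolding walk_in_def by auto
  show "walk_in V E xs" unfolding walk_in_def
  proof (intro conjI allI impI)
    show "xs \<noteq> []" using assms(2) .
    show "set xs \<subseteq> V" using w(1) by simp
    fix i assume i: "Suc i < length xs"
    then have "E ((xs @ [z]) ! i) ((xs @ [z]) ! Suc i)" using w(2) by simp
    then show "E (xs ! i) (xs ! Suc i)" using i by (simp add: nth_append)
  qed
  have "Suc (length xs - 1) < length (xs @ [z])" using assms(2) by simp
  then have "E ((xs @ [z]) ! (length xs - 1)) ((xs @ [z]) ! Suc (length xs - 1))" using w(2) by blast
  moreover have "(xs @ [z]) ! (length xs - 1) = last xs" using assms(2) by (simp add: nth_append last_conv_nth)
  moreover have "(xs @ [z]) ! Suc (length xs - 1) = z" using assms(2) by (simp add: nth_append)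
  ultimately show "E (last xs) z" by simp
  show "z \<in> V" using w(1) by simp
qed

lemma walk_prev:
  assumes "walk_in V E xs" "Suc 0 < length xs"
  shows "E (xs ! (length xs - 2)) (last xs)" "xs ! (length xs - 2) \<in> set xs"
proof -
  have "Suc (length xs - 2) < length xs" using assms(2) by simp
  then have "E (xs ! (length xs - 2)) (xs ! Suc (length xs - 2))" using assms(1) unfolding walk_in_def by blast
  moreover have "Suc (length xs - 2) = length xs - 1" using assms(2) by simp
  moreover have "xs ! (length xs - 1) = last xs" using assms(2) by (metis last_conv_nth list.size(3) not_less0)
  ultimately show "E (xs ! (length xs - 2)) (last xs)" by simp
  show "xs ! (length xs - 2) \<in> set xs" using assms(2) by simp
qed

lemma walk_orbit_finite:
  fixes V :: "'v set" and E V1 V2 G x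
  assumes T: "is_tree V E"
    and bip: "V1 \<union> V2 = V" "V1 \<inter> V2 = {}"
      "\<forall>x y. E x y \<longrightarrow> (x \<in> V1 \<and> y \<in> V2) \<or> (x \<in> V2 \<and> y \<in> V1)"
    and sub: "is_subgroup G (Aut V E)"
    and W1: "\<And>v u z. v \<in> V1 \<Longrightarrow> u \<in> nbhd V E v \<Longrightarrow> z \<in> nbhd V E v \<Longrightarrow> finite ((\<lambda>g. g z) ` stab (stab G v) u)"
    and W2: "\<And>w z. w \<in> V2 \<Longrightarrow> z \<in> nbhd V E w \<Longrightarrow> finite ((\<lambda>g. g z) ` stab G w)"
    and x: "x \<in> V2"
  shows "walk_in V E xs \<Longrightarrow> hd xs = x \<Longrightarrow> finite ((\<lambda>g. map g xs) ` stab G x)"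
proof (induction xs rule: rev_induct)
  case Nil
  then show ?case unfolding walk_in_def by simp
next
  case (snoc z xs)
  note GA = sub_facts(1)[OF sub] and gbij = sub_facts(2)[OF sub]
    and ginv = sub_facts(3)[OF sub] and gcomp = sub_facts(4)[OF sub]
  show ?case
  proof (cases "xs = []")
    case True
    then have zx: "z = x" using snoc.prems(2) by simp
    have "(\<lambda>g. map g (xs @ [z])) ` stab G x \<subseteq> {[x]}" using True zx unfolding stab_def by auto
    then show ?thesis using finite_subset by blast
  next
    case False
    have wxs: "walk_in V E xs" and elz: "E (last xs) z" and zV: "z \<in> V"
      using walk_snoc[OF snoc.prems(1) False] by auto
    have hdx: "hd xs = x" using snoc.prems(2) False by simp
    have IH: "finite ((\<lambda>g. map g xs) ` stab G x)" using snoc.IH[OF wxs hdx] .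
    define l where "l = last xs"
    have lset: "l \<in> set xs" unfolding l_def using False by simp
    have setV: "set xs \<subseteq> V" using wxs unfolding walk_in_def by simp
    have lV: "l \<in> V" using lset setV by blast
    define Ws where "Ws = (\<lambda>h. h z) ` {h \<in> G. \<forall>a\<in>set xs. h a = a}"
    have Wfin: "finite Ws"
    proof (cases "l \<in> V2")
      case True
      have "z \<in> nbhd V E l" using zV elz unfolding nbhd_def l_def by simp
      then have "finite ((\<lambda>g. g z) ` stab G l)" using W2[OF True] by simp
      moreover have "Ws \<subseteq> (\<lambda>g. g z) ` stab G l" unfolding Ws_def stab_def using lset by auto
      ultimately show ?thesis using finite_subset by blast
    next
      case False
      then have lV1: "l \<in> V1" using lV bip(1) by blast
      have "Suc 0 < length xs"
      proof (rule ccontr)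
        assume "\<not> Suc 0 < length xs"
        then have "length xs = 1" using \<open>xs \<noteq> []\<close> by (cases xs) auto
        then have "l = x" using hdx unfolding l_def by (cases xs) auto
        then show False using lV1 x bip(2) by blast
      qed
      define p where "p = xs ! (length xs - 2)"
      have epl: "E p l" and pset: "p \<in> set xs" using walk_prev[OF wxs \<open>Suc 0 < length xs\<close>] unfolding p_def l_def by auto
      have pV: "p \<in> V" using pset setV by blast
      have pn: "p \<in> nbhd V E l" using pV tree_sym[OF T epl] unfolding nbhd_def by simp
      have zn: "z \<in> nbhd V E l" using zV elz unfolding nbhd_def l_def by simp
      have "finite ((\<lambda>g. g z) ` stab (stab G l) p)" using W1[OF lV1 pn zn] .
      moreover have "Ws \<subseteq> (\<lambda>g. g z) ` stab (stab G l) p" unfolding Ws_def stab_def using lset pset by auto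
      ultimately show ?thesis using finite_subset by blast
    qed
    define Tr where "Tr = (\<lambda>g. map g xs) ` stab G x"
    define gt where "gt = (\<lambda>t. SOME g. g \<in> stab G x \<and> map g xs = t)"
    have gt: "gt t \<in> stab G x \<and> map (gt t) xs = t" if "t \<in> Tr" for t
    proof -
      have "\<exists>g. g \<in> stab G x \<and> map g xs = t" using that unfolding Tr_def by blast
      then show ?thesis unfolding gt_def by (rule someI_ex)
    qed
    have sub1: "(\<lambda>g. map g (xs @ [z])) ` stab G x \<subseteq> (\<Union>t\<in>Tr. (\<lambda>c. t @ [gt t c]) ` Ws)"
    proof
      fix s assume "s \<in> (\<lambda>g. map g (xs @ [z])) ` stab G x"
      then obtain g where g: "g \<in> stab G x" "s = map g (xs @ [z])" by blast
      define t where "t = map g xs"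
      have tT: "t \<in> Tr" unfolding t_def Tr_def using g(1) by (rule imageI)
      define g0 where "g0 = gt t"
      have g0: "g0 \<in> stab G x" "map g0 xs = t" using gt[OF tT] unfolding g0_def by auto
      have gG: "g \<in> G" and g0G: "g0 \<in> G" using g(1) g0(1) unfolding stab_def by auto
      have bg0: "bij g0" using gbij[OF g0G] .
      define h where "h = inv g0 \<circ> g"
      have hG: "h \<in> G" unfolding h_def using gcomp[OF ginv[OF g0G] gG] .
      have agree: "g a = g0 a" if "a \<in> set xs" for a
        using g0(2) that unfolding t_def by (metis map_eq_conv)
      have hfix: "h a = a" if "a \<in> set xs" for a
        using agree[OF that] bg0 unfolding h_def by (simp add: bij_def inv_f_f)
      have hW: "h z \<in> Ws" unfolding Ws_def using hG hfix by blast
      have "g0 (h z) = g z" unfolding h_def using bg0 by (simp add: bij_def surj_f_inv_f)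
      then have "s = t @ [gt t (h z)]" using g(2) unfolding t_def g0_def by simp
      then show "s \<in> (\<Union>t\<in>Tr. (\<lambda>c. t @ [gt t c]) ` Ws)" using tT hW by blast
    qed
    have "finite (\<Union>t\<in>Tr. (\<lambda>c. t @ [gt t c]) ` Ws)"
    proof (rule finite_UN_I)
      show "finite Tr" using IH unfolding Tr_def .
      fix t show "finite ((\<lambda>c. t @ [gt t c]) ` Ws)" using Wfin by (rule finite_imageI)
    qed
    then show ?thesis using sub1 finite_subset by blast
  qed
qed




lemma orbit_equiv:
  fixes V :: "'v set" and E V1 V2 G
  assumes T: "is_tree V E"
    and nl: "\<forall>v\<in>V. \<not> (\<exists>w. nbhd V E v = {w})"
    and bip: "V1 \<union> V2 = V" "V1 \<inter> V2 = {}"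
      "\<forall>x y. E x y \<longrightarrow> (x \<in> V1 \<and> y \<in> V2) \<or> (x \<in> V2 \<and> y \<in> V1)"
    and sub: "is_subgroup G (Aut V E)"
  shows "(\<forall>v\<in>V1. \<forall>w\<in>V2. (\<forall>u\<in>nbhd V E v. \<forall>z\<in>nbhd V E v. finite ((\<lambda>g. g z) ` stab (stab G v) u))
            \<and> (\<forall>z\<in>nbhd V E w. finite ((\<lambda>g. g z) ` stab G w)))
         \<longleftrightarrow> (\<forall>x\<in>V2. \<forall>y\<in>V2. finite ((\<lambda>g. g y) ` stab G x))"
proof -
  note GA = sub_facts(1)[OF sub] and gbij = sub_facts(2)[OF sub]
  have GAut: "g \<in> Aut V E" if "g \<in> G" for g using that GA by (rule subsetD[rotated])
  have bipE: "(x \<in> V1 \<and> y \<in> V2) \<or> (x \<in> V2 \<and> y \<in> V1)" if "E x y" for x y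
    using bip(3) that by simp
  have nb12: "y \<in> V2" if "x \<in> V1" "E x y" for x y using bipE[OF that(2)] that(1) bip(2) by blast
  have nb21: "y \<in> V1" if "x \<in> V2" "E x y" for x y using bipE[OF that(2)] that(1) bip(2) by blast
  have V1V: "x \<in> V" if "x \<in> V1" for x using that bip(1) by blast
  have V2V: "x \<in> V" if "x \<in> V2" for x using that bip(1) by blast
  show ?thesis
  proof
    assume L: "\<forall>v\<in>V1. \<forall>w\<in>V2. (\<forall>u\<in>nbhd V E v. \<forall>z\<in>nbhd V E v. finite ((\<lambda>g. g z) ` stab (stab G v) u))
            \<and> (\<forall>z\<in>nbhd V E w. finite ((\<lambda>g. g z) ` stab G w))"
    show "\<forall>x\<in>V2. \<forall>y\<in>V2. finite ((\<lambda>g. g y) ` stab G x)"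
    proof (intro ballI)
      fix x y assume x: "x \<in> V2" and y: "y \<in> V2"
      have W1: "finite ((\<lambda>g. g z) ` stab (stab G v) u)"
        if "v \<in> V1" "u \<in> nbhd V E v" "z \<in> nbhd V E v" for v u z
        using L that x by blast
      have W2: "finite ((\<lambda>g. g z) ` stab G w)" if "w \<in> V2" "z \<in> nbhd V E w" for w z
      proof -
        have "z \<in> V1" using that nb21 unfolding nbhd_def by blast
        then show ?thesis using L that by blast
      qed
      obtain xs where xs: "walk_in V E xs" "hd xs = x" "last xs = y"
        using T V2V[OF x] V2V[OF y] unfolding is_tree_def by blast
      have fin: "finite ((\<lambda>g. map g xs) ` stab G x)"
        using walk_orbit_finite[OF T bip sub W1 W2 x xs(1,2)] by blast
      have ne: "xs \<noteq> []" using xs(1) unfolding walk_in_def by simp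
      have "(\<lambda>g. g y) ` stab G x \<subseteq> last ` (\<lambda>g. map g xs) ` stab G x"
      proof
        fix c assume "c \<in> (\<lambda>g. g y) ` stab G x"
        then obtain g where g: "g \<in> stab G x" "c = g y" by blast
        have "last (map g xs) = g y" using ne xs(3) by (simp add: last_map)
        then show "c \<in> last ` (\<lambda>g. map g xs) ` stab G x" using g by (metis imageI)
      qed
      then show "finite ((\<lambda>g. g y) ` stab G x)" using fin finite_subset by blast
    qed
  next
    assume R: "\<forall>x\<in>V2. \<forall>y\<in>V2. finite ((\<lambda>g. g y) ` stab G x)"
    show "\<forall>v\<in>V1. \<forall>w\<in>V2. (\<forall>u\<in>nbhd V E v. \<forall>z\<in>nbhd V E v. finite ((\<lambda>g. g z) ` stab (stab G v) u))
            \<and> (\<forall>z\<in>nbhd V E w. finite ((\<lambda>g. g z) ` stab G w))"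
    proof (intro ballI conjI)
      fix v w assume v: "v \<in> V1" and w: "w \<in> V2"
      fix u z assume u: "u \<in> nbhd V E v" and z: "z \<in> nbhd V E v"
      have uV2: "u \<in> V2" using u nb12[OF v] unfolding nbhd_def by blast
      have zV2: "z \<in> V2" using z nb12[OF v] unfolding nbhd_def by blast
      have "finite ((\<lambda>g. g z) ` stab G u)" using R uV2 zV2 by blast
      moreover have "(\<lambda>g. g z) ` stab (stab G v) u \<subseteq> (\<lambda>g. g z) ` stab G u"
        unfolding stab_def by auto
      ultimately show "finite ((\<lambda>g. g z) ` stab (stab G v) u)" using finite_subset by blast
    next
      fix v w assume v: "v \<in> V1" and w: "w \<in> V2"
      fix y assume y: "y \<in> nbhd V E w"
      have yV: "y \<in> V" and ewy: "E w y" using y unfolding nbhd_def by auto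
      have yV1: "y \<in> V1" using nb21[OF w ewy] .
      have wn: "w \<in> nbhd V E y" using V2V[OF w] tree_sym[OF T ewy] unfolding nbhd_def by simp
      have "nbhd V E y \<noteq> {w}" using nl yV by blast
      then obtain w' where w': "w' \<in> nbhd V E y" "w' \<noteq> w" using wn by blast
      have ew'y: "E y w'" and w'V: "w' \<in> V" using w' unfolding nbhd_def by auto
      have w'V2: "w' \<in> V2" using nb12[OF yV1 ew'y] .
      define Ob where "Ob = (\<lambda>g. g w') ` stab G w"
      have Ofin: "finite Ob" unfolding Ob_def using R w w'V2 by blast
      define C where "C = (\<lambda>zz. {c. E w c \<and> E zz c})"
      have Cfin: "finite (C zz)" if "zz \<noteq> w" for zz
      proof (rule subsingleton_finite, intro ballI)
        fix c c' assume "c \<in> C zz" "c' \<in> C zz"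
        then have e: "E w c" "E zz c" "E w c'" "E zz c'" unfolding C_def by auto
        show "c = c'"
        proof (rule ccontr)
          assume "c \<noteq> c'"
          then have "w = zz" using tree_common[OF T e(1) e(3) e(2) e(4)] by simp
          then show False using that by simp
        qed
      qed
      have "(\<lambda>g. g y) ` stab G w \<subseteq> (\<Union>zz\<in>Ob - {w}. C zz)"
      proof
        fix c assume "c \<in> (\<lambda>g. g y) ` stab G w"
        then obtain g where g: "g \<in> G" "g w = w" "c = g y" unfolding stab_def by blast
        have gA: "g \<in> Aut V E" using GAut[OF g(1)] .
        have "E (g w) (g y)" using Aut_edge[OF gA V2V[OF w] yV] ewy by simp
        then have e1: "E w c" using g by simp
        have "E (g w') (g y)" using Aut_edge[OF gA w'V yV] tree_sym[OF T ew'y] by simp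
        then have e2: "E (g w') c" using g by simp
        have "g w' \<noteq> g w" using w'(2) gbij[OF g(1)] by (simp add: bij_def inj_eq)
        then have "g w' \<noteq> w" using g(2) by simp
        moreover have "g w' \<in> Ob" unfolding Ob_def stab_def using g(1,2) by blast
        ultimately show "c \<in> (\<Union>zz\<in>Ob - {w}. C zz)" using e1 e2 unfolding C_def by blast
      qed
      moreover have "finite (\<Union>zz\<in>Ob - {w}. C zz)"
      proof (rule finite_UN_I)
        show "finite (Ob - {w})" using Ofin by simp
        fix zz assume "zz \<in> Ob - {w}"
        then show "finite (C zz)" using Cfin by simp
      qed
      ultimately show "finite ((\<lambda>g. g y) ` stab G w)" using finite_subset by blast
    qed
  qed
qed




theorem lemma6p2:
  fixes V :: "'v set" and E :: "'v \<Rightarrow> 'v \<Rightarrow> bool"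
    and V1 V2 :: "'v set" and G :: "('v \<Rightarrow> 'v) set"
  assumes tree: "is_tree V E"
    and no_leaf: "\<forall>v\<in>V. \<not> (\<exists>w. nbhd V E v = {w})"
    and bip: "V1 \<union> V2 = V" "V1 \<inter> V2 = {}"
      "\<forall>x y. E x y \<longrightarrow> (x \<in> V1 \<and> y \<in> V2) \<or> (x \<in> V2 \<and> y \<in> V1)"
    and sub: "is_subgroup G (Aut V E)"
    and closed: "closedin (subtopology (perm_top V) (Aut V E)) G"
    and fix12: "\<forall>g\<in>G. g ` V1 = V1 \<and> g ` V2 = V2"
  shows "closedin (perm_top V1) (induced G V1) \<and> closedin (perm_top V2) (induced G V2)
    \<and> ((\<forall>v\<in>V. closedin (perm_top (nbhd V E v)) (induced (stab G v) (nbhd V E v))) \<longrightarrow>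
        ((\<forall>v\<in>V1. \<forall>w\<in>V2.
            (\<forall>u\<in>nbhd V E v. compactin (perm_top (nbhd V E v))
                 (stab (induced (stab G v) (nbhd V E v)) u))
          \<and> compactin (perm_top (nbhd V E w)) (induced (stab G w) (nbhd V E w)))
        \<longleftrightarrow>
         (\<forall>x\<in>V2. compactin (perm_top V2) (stab (induced G V2) x))))"
proof -
  note GA = sub_facts(1)[OF sub] and gbij = sub_facts(2)[OF sub] and ginv = sub_facts(3)[OF sub]
  have GAut: "g \<in> Aut V E" if "g \<in> G" for g using that GA by (rule subsetD[rotated])
  have c1: "closedin (perm_top V1) (induced G V1)"
    by (rule induced_closed[OF tree no_leaf bip sub closed fix12])
  have bip': "V2 \<union> V1 = V" "V2 \<inter> V1 = {}"
      "\<forall>x y. E x y \<longrightarrow> (x \<in> V2 \<and> y \<in> V1) \<or> (x \<in> V1 \<and> y \<in> V2)"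
    using bip by blast+
  have fix21: "\<forall>g\<in>G. g ` V2 = V2 \<and> g ` V1 = V1" using fix12 by blast
  have c2: "closedin (perm_top V2) (induced G V2)"
    by (rule induced_closed[OF tree no_leaf bip' sub closed fix21])
  have V1V: "x \<in> V" if "x \<in> V1" for x using that bip(1) by blast
  have V2V: "x \<in> V" if "x \<in> V2" for x using that bip(1) by blast
  have main: "((\<forall>v\<in>V1. \<forall>w\<in>V2.
            (\<forall>u\<in>nbhd V E v. compactin (perm_top (nbhd V E v))
                 (stab (induced (stab G v) (nbhd V E v)) u))
          \<and> compactin (perm_top (nbhd V E w)) (induced (stab G w) (nbhd V E w)))
        \<longleftrightarrow>
         (\<forall>x\<in>V2. compactin (perm_top V2) (stab (induced G V2) x)))"
    if clv: "\<forall>v\<in>V. closedin (perm_top (nbhd V E v)) (induced (stab G v) (nbhd V E v))"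
  proof -
    have A: "compactin (perm_top (nbhd V E v)) (stab (induced (stab G v) (nbhd V E v)) u)
        \<longleftrightarrow> (\<forall>z\<in>nbhd V E v. finite ((\<lambda>g. g z) ` stab (stab G v) u))"
      if v: "v \<in> V" and u: "u \<in> nbhd V E v" for v u
    proof -
      have eq: "stab (induced (stab G v) (nbhd V E v)) u = induced (stab (stab G v) u) (nbhd V E v)"
        using stab_induced[OF u] .
      show ?thesis unfolding eq
      proof (rule compact_induced_iff)
        fix g assume "g \<in> stab (stab G v) u"
        then have g: "g \<in> G" "g v = v" "g u = u" unfolding stab_def by auto
        show "bij g" using gbij[OF g(1)] .
        show "g ` nbhd V E v = nbhd V E v" using nbhd_aut[OF GAut[OF g(1)] v] g(2) by simp
        have "inv g v = v" "inv g u = u" using inv_fix[OF gbij[OF g(1)]] g(2,3) by auto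
        then show "inv g \<in> stab (stab G v) u" using ginv[OF g(1)] unfolding stab_def by simp
      next
        have "closedin (perm_top (nbhd V E v)) (stab (induced (stab G v) (nbhd V E v)) u)"
          using closed_stab[OF bspec[OF clv v] u] .
        then show "closedin (perm_top (nbhd V E v)) (induced (stab (stab G v) u) (nbhd V E v))"
          unfolding eq .
      qed
    qed
    have B: "compactin (perm_top (nbhd V E w)) (induced (stab G w) (nbhd V E w))
        \<longleftrightarrow> (\<forall>z\<in>nbhd V E w. finite ((\<lambda>g. g z) ` stab G w))"
      if w: "w \<in> V" for w
    proof (rule compact_induced_iff)
      fix g assume "g \<in> stab G w"
      then have g: "g \<in> G" "g w = w" unfolding stab_def by auto
      show "bij g" using gbij[OF g(1)] .
      show "g ` nbhd V E w = nbhd V E w" using nbhd_aut[OF GAut[OF g(1)] w] g(2) by simp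
      have "inv g w = w" using inv_fix[OF gbij[OF g(1)]] g(2) by auto
      then show "inv g \<in> stab G w" using ginv[OF g(1)] unfolding stab_def by simp
    next
      show "closedin (perm_top (nbhd V E w)) (induced (stab G w) (nbhd V E w))"
        using clv w by blast
    qed
    have C: "compactin (perm_top V2) (stab (induced G V2) x)
        \<longleftrightarrow> (\<forall>y\<in>V2. finite ((\<lambda>g. g y) ` stab G x))"
      if x: "x \<in> V2" for x
    proof -
      have eq: "stab (induced G V2) x = induced (stab G x) V2" using stab_induced[OF x] .
      show ?thesis unfolding eq
      proof (rule compact_induced_iff)
        fix g assume "g \<in> stab G x"
        then have g: "g \<in> G" "g x = x" unfolding stab_def by auto
        show "bij g" using gbij[OF g(1)] .
        show "g ` V2 = V2" using fix12 g(1) by blast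
        have "inv g x = x" using inv_fix[OF gbij[OF g(1)]] g(2) by auto
        then show "inv g \<in> stab G x" using ginv[OF g(1)] unfolding stab_def by simp
      next
        have "closedin (perm_top V2) (stab (induced G V2) x)" using closed_stab[OF c2 x] .
        then show "closedin (perm_top V2) (induced (stab G x) V2)" unfolding eq .
      qed
    qed
    have "((\<forall>v\<in>V1. \<forall>w\<in>V2.
            (\<forall>u\<in>nbhd V E v. compactin (perm_top (nbhd V E v))
                 (stab (induced (stab G v) (nbhd V E v)) u))
          \<and> compactin (perm_top (nbhd V E w)) (induced (stab G w) (nbhd V E w)))
        \<longleftrightarrow> (\<forall>v\<in>V1. \<forall>w\<in>V2. (\<forall>u\<in>nbhd V E v. \<forall>z\<in>nbhd V E v. finite ((\<lambda>g. g z) ` stab (stab G v) u))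
            \<and> (\<forall>z\<in>nbhd V E w. finite ((\<lambda>g. g z) ` stab G w))))"
      using A B V1V V2V by (simp cong: ball_cong)
    also have "\<dots> \<longleftrightarrow> (\<forall>x\<in>V2. \<forall>y\<in>V2. finite ((\<lambda>g. g y) ` stab G x))"
      by (rule orbit_equiv[OF tree no_leaf bip sub])
    also have "\<dots> \<longleftrightarrow> (\<forall>x\<in>V2. compactin (perm_top V2) (stab (induced G V2) x))"
      using C by (simp cong: ball_cong)
    finally show ?thesis .
  qed
  show ?thesis using c1 c2 main by blast
qed


end
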